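(* Let $N\ge3$, let $G_{2N}=K_2\otimes K_N$, and let $k=N-1$ be the common degree of its vertices. For vertices $i,j$ let $d_{ij}$ be their distance, and let $M^m_{ij}$ be the number of walks of length $m$ from $i$ to $j$ in $G_{2N}$. Then: - if $i\neq j$, $d_{ij}=1$ and $m$ is odd, then $M^m_{ij}=\frac{k^{m}+1}{k+1}$; - if $i\neq j$, $d_{ij}=2$ and $m\ge 2$ is even, then $M^m_{ij}=\frac{k^{m}-1}{k+1}$; - if $i=j$ and $m$ is odd, then $M^m_{ii}=0$; - if $i=j$ and $m\ge2$ is even, then $M^m_{ii}=\frac{k^{m}-1}{k+1}+1$.
   Context: $K_2\otimes K_N$ is the Kronecker (tensor) product of $K_2$ and $K_N$. Its vertex set is $\{1,2\}\times\{1,\dots,N\}$, with $(a,u)\sim(b,v)$ if and only if $a\neq b$ and $u\neq v$. *)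

theory Defs
  imports Complex_Main
begin

definition tensor_vertices :: "nat \<Rightarrow> (nat \<times> nat) set" where
  "tensor_vertices N = {1,2} \<times> {1..N}"

definition tensor_adj :: "nat \<Rightarrow> nat \<times> nat \<Rightarrow> nat \<times> nat \<Rightarrow> bool" where
  "tensor_adj N x y \<longleftrightarrow> x \<in> tensor_vertices N \<and> y \<in> tensor_vertices N
      \<and> fst x \<noteq> fst y \<and> snd x \<noteq> snd y"

definition walks :: "nat \<Rightarrow> nat \<Rightarrow> nat \<times> nat \<Rightarrow> nat \<times> nat \<Rightarrow> (nat \<times> nat) list set" where
  "walks N m i j = {p. length p = Suc m \<and> set p \<subseteq> tensor_vertices N
      \<and> hd p = i \<and> last p = j \<and> (\<forall>t<m. tensor_adj N (p ! t) (p ! Suc t))}"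

definition num_walks :: "nat \<Rightarrow> nat \<Rightarrow> nat \<times> nat \<Rightarrow> nat \<times> nat \<Rightarrow> nat" where
  "num_walks N m i j = card (walks N m i j)"

definition graph_dist :: "nat \<Rightarrow> nat \<times> nat \<Rightarrow> nat \<times> nat \<Rightarrow> nat" where
  "graph_dist N i j = (LEAST m. walks N m i j \<noteq> {})"

end

theory Submission imports Defs begin

lemma fin_walks: "finite (walks N m i j)"
proof -
  have "walks N m i j \<subseteq> {p. set p \<subseteq> tensor_vertices N \<and> length p = Suc m}"
    unfolding walks_def by auto
  moreover have "finite {p. set p \<subseteq> tensor_vertices N \<and> length p = Suc m}"
    by (rule finite_lists_length_eq) (simp add: tensor_vertices_def)
  ultimately show ?thesis by (rule finite_subset)
qed

lemma walks_0: "walks N 0 i j = (if i = j \<and> i \<in> tensor_vertices N then {[i]} else {})"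
  unfolding walks_def by (auto simp: length_Suc_conv)

lemma walks_Suc: "walks N (Suc m) i j = (\<Union>x\<in>{x. tensor_adj N x j}. (\<lambda>p. p @ [j]) ` walks N m i x)"
proof (intro equalityI subsetI)
  fix q assume q: "q \<in> walks N (Suc m) i j"
  hence len: "length q = Suc (Suc m)" and st: "set q \<subseteq> tensor_vertices N" and h: "hd q = i"
    and l: "last q = j" and ad: "\<forall>t<Suc m. tensor_adj N (q ! t) (q ! Suc t)"
    unfolding walks_def by auto
  have qe: "q = butlast q @ [j]" using len l
    by (metis append_butlast_last_id list.size(3) nat.distinct(1))
  have lb: "length (butlast q) = Suc m" using len by simp
  have "butlast q \<in> walks N m i (q ! m)"
    unfolding walks_def
  proof (intro CollectI conjI allI impI)
    show "length (butlast q) = Suc m" by fact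
    show "set (butlast q) \<subseteq> tensor_vertices N" using st by (meson dual_order.trans in_set_butlastD subsetI)
    show "hd (butlast q) = i" using h lb qe by (metis hd_append2 list.size(3) nat.distinct(1))
    have "butlast q \<noteq> []" using lb by (cases "butlast q") auto
    hence "last (butlast q) = butlast q ! m" using lb by (simp add: last_conv_nth)
    thus "last (butlast q) = q ! m" using lb len by (simp add: nth_butlast)
    fix t assume "t < m" thus "tensor_adj N (butlast q ! t) (butlast q ! Suc t)"
      using ad lb by (simp add: nth_butlast)
  qed
  moreover have "tensor_adj N (q ! m) j" using ad len l by (metis last_conv_nth lessI list.size(3) nat.distinct(1) diff_Suc_1)
  ultimately show "q \<in> (\<Union>x\<in>{x. tensor_adj N x j}. (\<lambda>p. p @ [j]) ` walks N m i x)"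
    using qe by blast
next
  fix q assume "q \<in> (\<Union>x\<in>{x. tensor_adj N x j}. (\<lambda>p. p @ [j]) ` walks N m i x)"
  then obtain x p where a: "tensor_adj N x j" and p: "p \<in> walks N m i x" and qe: "q = p @ [j]" by blast
  from p have len: "length p = Suc m" and st: "set p \<subseteq> tensor_vertices N" and h: "hd p = i"
    and l: "last p = x" and ad: "\<forall>t<m. tensor_adj N (p ! t) (p ! Suc t)"
    unfolding walks_def by auto
  have jv: "j \<in> tensor_vertices N" using a unfolding tensor_adj_def by simp
  have pne: "p \<noteq> []" using len by (cases p) auto
  have pm: "p ! m = x" using l len last_conv_nth[OF pne] by simp
  show "q \<in> walks N (Suc m) i j"
    unfolding walks_def qe
  proof (intro CollectI conjI allI impI)
    show "length (p @ [j]) = Suc (Suc m)" using len by simp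
    show "set (p @ [j]) \<subseteq> tensor_vertices N" using st jv by simp
    show "hd (p @ [j]) = i" using h len by (metis hd_append2 list.size(3) nat.distinct(1))
    show "last (p @ [j]) = j" by simp
    fix t assume t: "t < Suc m"
    show "tensor_adj N ((p @ [j]) ! t) ((p @ [j]) ! Suc t)"
    proof (cases "t < m")
      case True thus ?thesis using ad len by (simp add: nth_append)
    next
      case False hence "t = m" using t by simp
      thus ?thesis using a pm len by (simp add: nth_append)
    qed
  qed
qed

lemma card_walks_Suc: "num_walks N (Suc m) i j = (\<Sum>x\<in>{x. tensor_adj N x j}. num_walks N m i x)"
proof -
  have fin: "finite {x. tensor_adj N x j}"
    by (rule finite_subset[of _ "tensor_vertices N"]) (auto simp: tensor_adj_def tensor_vertices_def)
  have "num_walks N (Suc m) i j = card (\<Union>x\<in>{x. tensor_adj N x j}. (\<lambda>p. p @ [j]) ` walks N m i x)"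
    unfolding num_walks_def walks_Suc ..
  also have "\<dots> = (\<Sum>x\<in>{x. tensor_adj N x j}. card ((\<lambda>p. p @ [j]) ` walks N m i x))"
  proof (rule card_UN_disjoint[OF fin])
    show "\<forall>x\<in>{x. tensor_adj N x j}. finite ((\<lambda>p. p @ [j]) ` walks N m i x)" using fin_walks by blast
    show "\<forall>x\<in>{x. tensor_adj N x j}. \<forall>y\<in>{x. tensor_adj N x j}. x \<noteq> y \<longrightarrow>
      (\<lambda>p. p @ [j]) ` walks N m i x \<inter> (\<lambda>p. p @ [j]) ` walks N m i y = {}"
      unfolding walks_def by auto
  qed
  also have "\<dots> = (\<Sum>x\<in>{x. tensor_adj N x j}. num_walks N m i x)"
    unfolding num_walks_def by (intro sum.cong refl card_image) (auto intro: inj_onI)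
  finally show ?thesis .
qed


definition F :: "nat \<Rightarrow> nat \<Rightarrow> nat \<times> nat \<Rightarrow> nat \<times> nat \<Rightarrow> int" where
  "F N m i j = (if (fst j = fst i) = even m then
     (if snd i = snd j then (int N - 1)^m + (int N - 1)*(-1)^m else (int N - 1)^m - (-1)^m) else 0)"

lemma sum_ite:
  fixes A B :: int
  assumes "finite S"
  shows "(\<Sum>w\<in>S. if u = w then A else B) = (if u \<in> S then A + (int (card S) - 1) * B else int (card S) * B)"
proof (cases "u \<in> S")
  case True
  have "(\<Sum>w\<in>S. if u = w then A else B) = A + (\<Sum>w\<in>S - {u}. if u = w then A else B)"
    using sum.remove[OF assms True, of "\<lambda>w. if u = w then A else B"] by simp
  also have "(\<Sum>w\<in>S - {u}. if u = w then A else B) = (\<Sum>w\<in>S - {u}. B)"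
    by (rule sum.cong) auto
  also have "\<dots> = int (card S - 1) * B" using True assms by simp
  also have "card S > 0" using True assms card_gt_0_iff by blast
  hence "int (card S - 1) = int (card S) - 1" by simp
  finally show ?thesis using True by simp
next
  case False
  have "(\<Sum>w\<in>S. if u = w then A else B) = (\<Sum>w\<in>S. B)"
    by (rule sum.cong) (use False in auto)
  thus ?thesis using False by simp
qed

lemma nbrs: "j \<in> tensor_vertices N \<Longrightarrow>
  {x. tensor_adj N x j} = (\<lambda>w. (3 - fst j, w)) ` ({1..N} - {snd j})"
proof (intro equalityI subsetI)
  fix x assume j: "j \<in> tensor_vertices N" and "x \<in> {x. tensor_adj N x j}"
  hence x: "x \<in> tensor_vertices N" "fst x \<noteq> fst j" "snd x \<noteq> snd j" unfolding tensor_adj_def by auto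
  have "fst x = 3 - fst j" using x j unfolding tensor_vertices_def by auto
  moreover have "snd x \<in> {1..N} - {snd j}" using x unfolding tensor_vertices_def by auto
  ultimately show "x \<in> (\<lambda>w. (3 - fst j, w)) ` ({1..N} - {snd j})"
    by (intro rev_image_eqI[of "snd x"]) (auto simp: prod_eq_iff)
next
  fix x assume j: "j \<in> tensor_vertices N" and "x \<in> (\<lambda>w. (3 - fst j, w)) ` ({1..N} - {snd j})"
  then obtain w where w: "w \<in> {1..N}" "w \<noteq> snd j" and xe: "x = (3 - fst j, w)" by blast
  have "fst j = 1 \<or> fst j = 2" using j unfolding tensor_vertices_def by auto
  thus "x \<in> {x. tensor_adj N x j}" using w xe j unfolding tensor_adj_def tensor_vertices_def by auto
qed

lemma main:
  assumes "N \<ge> 2" "i \<in> tensor_vertices N"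
  shows "j \<in> tensor_vertices N \<Longrightarrow> int N * int (num_walks N m i j) = F N m i j"
proof (induction m arbitrary: j)
  case 0
  then show ?case using assms(2) unfolding num_walks_def walks_0 F_def tensor_vertices_def
    by (auto simp: prod_eq_iff)
next
  case (Suc m)
  let ?S = "{1..N} - {snd j}"
  have inj: "inj_on (\<lambda>w. (3 - fst j, w)) ?S" by (auto intro: inj_onI)
  have "int N * int (num_walks N (Suc m) i j) = (\<Sum>x\<in>{x. tensor_adj N x j}. int N * int (num_walks N m i x))"
    by (simp add: card_walks_Suc sum_distrib_left)
  also have "\<dots> = (\<Sum>w\<in>?S. int N * int (num_walks N m i (3 - fst j, w)))"
    unfolding nbrs[OF Suc.prems] by (rule sum.reindex_cong[OF inj refl]) simp
  also have "\<dots> = (\<Sum>w\<in>?S. F N m i (3 - fst j, w))"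
    by (rule sum.cong) (use Suc.prems in \<open>auto intro!: Suc.IH simp: tensor_vertices_def\<close>)
  finally have eq: "int N * int (num_walks N (Suc m) i j) = (\<Sum>w\<in>?S. F N m i (3 - fst j, w))" .
  have fi: "fst i = 1 \<or> fst i = 2" "fst j = 1 \<or> fst j = 2" "snd i \<in> {1..N}" "snd j \<in> {1..N}"
    using assms(2) Suc.prems unfolding tensor_vertices_def by auto
  have par: "(3 - fst j = fst i) = (\<not> (fst j = fst i))" using fi by auto
  have cS: "card ?S = N - 1" using fi by simp
  show ?case
  proof (cases "(fst j = fst i) = even (Suc m)")
    case False
    hence "\<And>w. F N m i (3 - fst j, w) = 0" unfolding F_def using par by auto
    thus ?thesis using eq False unfolding F_def by simp
  next
    case True
    define k :: int where "k = int N - 1"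
    define s :: int where "s = (-1)^m"
    have "\<And>w. F N m i (3 - fst j, w) = (if snd i = w then k^m + k*s else k^m - s)"
      unfolding F_def k_def s_def using par True by auto
    hence eq2: "int N * int (num_walks N (Suc m) i j) = (if snd i \<in> ?S then (k^m + k*s) + (int (card ?S) - 1) * (k^m - s) else int (card ?S) * (k^m - s))"
      using eq sum_ite[of ?S "snd i" "k^m + k*s" "k^m - s"] by simp
    have ck: "int (card ?S) = k" unfolding cS k_def using assms(1) by simp
    show ?thesis
    proof (cases "snd i = snd j")
      case True
      hence "int N * int (num_walks N (Suc m) i j) = k * (k^m - s)" using eq2 ck by simp
      thus ?thesis using True \<open>(fst j = fst i) = even (Suc m)\<close> unfolding F_def k_def s_def
        by (simp add: algebra_simps)
    next
      case False
      hence "int N * int (num_walks N (Suc m) i j) = (k^m + k*s) + (k - 1) * (k^m - s)" using eq2 ck fi by simp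
      thus ?thesis using False \<open>(fst j = fst i) = even (Suc m)\<close> unfolding F_def k_def s_def
        by (simp add: algebra_simps)
    qed
  qed
qed


lemma F_nz_iff:
  assumes "N \<ge> 2" "i \<in> tensor_vertices N" "j \<in> tensor_vertices N"
  shows "walks N m i j \<noteq> {} \<longleftrightarrow> F N m i j \<noteq> 0"
proof -
  have "walks N m i j \<noteq> {} \<longleftrightarrow> num_walks N m i j \<noteq> 0"
    unfolding num_walks_def using fin_walks by auto
  also have "\<dots> \<longleftrightarrow> int N * int (num_walks N m i j) \<noteq> 0" using assms(1) by simp
  finally show ?thesis using main[OF assms(1,2,3)] by simp
qed

lemma exists_walk:
  assumes "N \<ge> 3" "i \<in> tensor_vertices N" "j \<in> tensor_vertices N"
  shows "\<exists>m. walks N m i j \<noteq> {}"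
proof -
  define k :: int where "k = int N - 1"
  have k2: "k \<ge> 2" using assms(1) unfolding k_def by simp
  have fi: "fst i = 1 \<or> fst i = 2" "fst j = 1 \<or> fst j = 2"
    using assms(2,3) unfolding tensor_vertices_def by auto
  have N2: "N \<ge> 2" using assms(1) by simp
  have k4: "k * k \<ge> 4" using mult_mono[OF k2 k2] k2 by simp
  note nz = F_nz_iff[OF N2 assms(2,3)]
  show ?thesis
  proof (cases "fst j = fst i")
    case True
    show ?thesis
    proof (cases "snd i = snd j")
      case True
      hence "F N 0 i j \<noteq> 0" using \<open>fst j = fst i\<close> unfolding F_def using k2 k_def by auto
      thus ?thesis using nz by blast
    next
      case False
      have "k^2 - 1 > 0" using k4 by (simp add: power2_eq_square)
      hence "F N 2 i j \<noteq> 0" using False \<open>fst j = fst i\<close> unfolding F_def k_def by auto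
      thus ?thesis using nz by blast
    qed
  next
    case False
    show ?thesis
    proof (cases "snd i = snd j")
      case True
      have "k * (k * k - 1) > 0" using k2 k4 by (intro mult_pos_pos) linarith+
      hence "k^3 + k * (-1)^3 > 0" by (simp add: power3_eq_cube algebra_simps)
      hence "F N 3 i j \<noteq> 0" using True False unfolding F_def k_def by auto
      thus ?thesis using nz by blast
    next
      case False
      hence "F N 1 i j \<noteq> 0" using \<open>fst j \<noteq> fst i\<close> k2 unfolding F_def k_def by auto
      thus ?thesis using nz by blast
    qed
  qed
qed

theorem lemma7:
  fixes N m :: nat and i j :: "nat \<times> nat" and k :: real
  assumes "N \<ge> 3"
    and "k = real N - 1"
    and "i \<in> tensor_vertices N" and "j \<in> tensor_vertices N"
  shows "(i \<noteq> j \<and> graph_dist N i j = 1 \<and> odd m \<longrightarrow>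
            real (num_walks N m i j) = (k ^ m + 1) / (k + 1))
       \<and> (i \<noteq> j \<and> graph_dist N i j = 2 \<and> even m \<and> m \<ge> 2 \<longrightarrow>
            real (num_walks N m i j) = (k ^ m - 1) / (k + 1))
       \<and> (i = j \<and> odd m \<longrightarrow> num_walks N m i i = 0)
       \<and> (i = j \<and> even m \<and> m \<ge> 2 \<longrightarrow>
            real (num_walks N m i i) = (k ^ m - 1) / (k + 1) + 1)"
proof -
  have N2: "N \<ge> 2" using assms(1) by simp
  note M = main[OF N2 assms(3,4)]
  have gd: "walks N (graph_dist N i j) i j \<noteq> {}"
    unfolding graph_dist_def using exists_walk[OF assms(1,3,4)] by (rule LeastI_ex)
  note nz = F_nz_iff[OF N2 assms(3,4)]
  have fi: "fst i = 1 \<or> fst i = 2" "fst j = 1 \<or> fst j = 2"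
    using assms(3,4) unfolding tensor_vertices_def by auto
  have Nk: "real N = k + 1" using assms(2) by simp
  have Npos: "real N > 0" using assms(1) by simp
  have R: "real N * real (num_walks N m i j) = of_int (F N m i j)"
    using arg_cong[OF M, of real_of_int] by simp
  have kk: "real_of_int (int N - 1) = k" using assms(2) by simp
  have c1: "real (num_walks N m i j) = (k ^ m + 1) / (k + 1)"
    if "i \<noteq> j" "graph_dist N i j = 1" "odd m"
  proof -
    have "F N 1 i j \<noteq> 0" using gd that nz by simp
    hence "fst j \<noteq> fst i" "snd i \<noteq> snd j" unfolding F_def by (auto split: if_splits)
    hence "F N m i j = (int N - 1)^m + 1" using that(3) unfolding F_def by simp
    hence "real N * real (num_walks N m i j) = k^m + 1" using R kk by simp
    thus ?thesis using Nk Npos by (simp add: field_simps)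
  qed
  have c2: "real (num_walks N m i j) = (k ^ m - 1) / (k + 1)"
    if "i \<noteq> j" "graph_dist N i j = 2" "even m"
  proof -
    have "F N 2 i j \<noteq> 0" using gd that nz by simp
    hence "fst j = fst i" unfolding F_def by (auto split: if_splits)
    moreover have "snd i \<noteq> snd j" using that(1) calculation by (auto simp: prod_eq_iff)
    ultimately have "F N m i j = (int N - 1)^m - 1" using that(3) unfolding F_def by simp
    hence "real N * real (num_walks N m i j) = k^m - 1" using R kk by simp
    thus ?thesis using Nk Npos by (simp add: field_simps)
  qed
  have c3: "num_walks N m i i = 0" if "i = j" "odd m"
    using M[of m] that assms(1) unfolding F_def by simp
  have c4: "real (num_walks N m i i) = (k ^ m - 1) / (k + 1) + 1" if "i = j" "even m"
  proof -
    have "F N m i j = (int N - 1)^m + (int N - 1)" using that unfolding F_def by simp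
    hence "real N * real (num_walks N m i i) = k^m + k" using R kk that(1) by simp
    thus ?thesis using Nk Npos by (simp add: field_simps)
  qed
  show ?thesis by (intro conjI impI) (metis c1 c2 c3 c4)+
qed

end
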